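(* Let $m,n\ge1$ and let $\lambda\subseteq\nu\subseteq(n-1)^{m-1}$ be partitions. Then the polytope $\mathrm{PASM}(\nu/\lambda,m,n)$ is integrally equivalent to the order polytope $\mathcal{O}(P(\nu/\lambda))$.
   Context: A partition $\mu=(\mu_1\ge\mu_2\ge\cdots)$ is a weakly decreasing sequence of nonnegative integers with finitely many nonzero terms, identified with the set of positions $\{(i,j):i\ge1,1\le j\le\mu_i\}$; $\mu\subseteq\nu$ means $\mu_i\le\nu_i$ for all $i$, and $\mu\subseteq a^b$ means $\mu$ has at most $b$ positive parts and $\mu_1\le a$. For $\mu\subseteq(n-1)^{m-1}$, the $m\times n$ matrix $M^\mu$ has entries $M^\mu_{1,\mu_1+1}=1$; for each $1\le k\le m-1$ with $\mu_k>\mu_{k+1}$, $M^\mu_{k+1,\mu_{k+1}+1}=1$ and $M^\mu_{k+1,\mu_k+1}=-1$; all other entries $0$. $\mathrm{PASM}(\nu/\lambda,m,n)$ is the convex hull in $\mathbb{R}^{mn}$ of $\{M^\mu:\lambda\subseteq\mu\subseteq\nu\}$. $P(\nu/\lambda)$ is the poset whose elements are the positions $(i,j)$ in $\nu$ but not in $\lambda$, with $(i,j)\le(i',j')$ iff $i\le i'$ and $j\le j'$. For a finite poset $P$, $\mathcal{O}(P)\subseteq\mathbb{R}^P$ is the set of $f:P\to\mathbb{R}$ with $0\le f(p)\le 1$ for all $p$ and $f(p)\le f(q)$ whenever $p\le q$. Integer polytopes $\mathcal{P}\subset\mathbb{R}^d$, $\mathcal{Q}\subset\mathbb{R}^r$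 are integrally equivalent if there is an affine map $f:\mathbb{R}^d\to\mathbb{R}^r$ mapping $\mathcal{P}$ bijectively onto $\mathcal{Q}$ and $\mathbb{Z}^d\cap\mathrm{aff}(\mathcal{P})$ bijectively onto $\mathbb{Z}^r\cap\mathrm{aff}(\mathcal{Q})$, where $\mathrm{aff}$ is affine span. *)

theory Defs
  imports Complex_Main
begin

text \<open>A partition is a function mu :: nat => nat, with parts mu 1 >= mu 2 >= ...;
  index 0 is unused and normalised to 0.\<close>

definition is_partition :: "(nat \<Rightarrow> nat) \<Rightarrow> bool" where
  "is_partition \<mu> \<longleftrightarrow> \<mu> 0 = 0 \<and> (\<forall>i\<ge>1. \<mu> (Suc i) \<le> \<mu> i) \<and> finite {i. \<mu> i \<noteq> 0}"

definition part_le :: "(nat \<Rightarrow> nat) \<Rightarrow> (nat \<Rightarrow> nat) \<Rightarrow> bool" where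
  "part_le \<mu> \<nu> \<longleftrightarrow> (\<forall>i\<ge>1. \<mu> i \<le> \<nu> i)"

definition in_box :: "(nat \<Rightarrow> nat) \<Rightarrow> nat \<Rightarrow> nat \<Rightarrow> bool" where
  "in_box \<mu> a b \<longleftrightarrow> (\<forall>i\<ge>1. \<mu> i \<le> a) \<and> (\<forall>i>b. \<mu> i = 0)"

definition skew_cells :: "(nat \<Rightarrow> nat) \<Rightarrow> (nat \<Rightarrow> nat) \<Rightarrow> (nat \<times> nat) set" where
  "skew_cells \<nu> la = {(i, j). i \<ge> 1 \<and> 1 \<le> j \<and> j \<le> \<nu> i \<and> \<not> (j \<le> la i)}"

text \<open>The poset P(nu/lambda) carries the componentwise order on positions.\<close>
definition pos_le :: "nat \<times> nat \<Rightarrow> nat \<times> nat \<Rightarrow> bool" where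
  "pos_le p q \<longleftrightarrow> fst p \<le> fst q \<and> snd p \<le> snd q"

definition RI :: "'i set \<Rightarrow> ('i \<Rightarrow> real) set" where
  "RI I = {x. \<forall>p. p \<notin> I \<longrightarrow> x p = 0}"

definition ZI :: "'i set \<Rightarrow> ('i \<Rightarrow> real) set" where
  "ZI I = {x \<in> RI I. \<forall>p. x p \<in> \<int>}"

definition conv_hull :: "('i \<Rightarrow> real) set \<Rightarrow> ('i \<Rightarrow> real) set" where
  "conv_hull S = {x. \<exists>F c. finite F \<and> F \<subseteq> S \<and> (\<forall>v\<in>F. c v \<ge> 0) \<and> sum c F = 1 \<and>
                        x = (\<lambda>p. \<Sum>v\<in>F. c v * v p)}"

definition aff_hull :: "('i \<Rightarrow> real) set \<Rightarrow> ('i \<Rightarrow> real) set" where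
  "aff_hull S = {x. \<exists>F c. finite F \<and> F \<subseteq> S \<and> sum c F = 1 \<and>
                        x = (\<lambda>p. \<Sum>v\<in>F. c v * v p)}"

definition affine_map :: "'i set \<Rightarrow> 'j set \<Rightarrow> (('i \<Rightarrow> real) \<Rightarrow> ('j \<Rightarrow> real)) \<Rightarrow> bool" where
  "affine_map I J f \<longleftrightarrow> (\<forall>x\<in>RI I. f x \<in> RI J) \<and>
     (\<forall>x\<in>RI I. \<forall>y\<in>RI I. \<forall>t::real.
        f (\<lambda>p. t * x p + (1 - t) * y p) = (\<lambda>q. t * f x q + (1 - t) * f y q))"

definition integrally_equivalent ::
  "'i set \<Rightarrow> ('i \<Rightarrow> real) set \<Rightarrow> 'j set \<Rightarrow> ('j \<Rightarrow> real) set \<Rightarrow> bool" where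
  "integrally_equivalent I P J Q \<longleftrightarrow>
     (\<exists>f. affine_map I J f \<and> bij_betw f P Q \<and>
          bij_betw f (ZI I \<inter> aff_hull P) (ZI J \<inter> aff_hull Q))"

definition Mmat :: "(nat \<Rightarrow> nat) \<Rightarrow> nat \<Rightarrow> nat \<Rightarrow> (nat \<times> nat \<Rightarrow> real)" where
  "Mmat \<mu> m n = (\<lambda>(i, j).
     if 1 \<le> i \<and> i \<le> m \<and> 1 \<le> j \<and> j \<le> n then
       (if i = 1 \<and> j = \<mu> 1 + 1 then 1
        else if 2 \<le> i \<and> \<mu> (i - 1) > \<mu> i \<and> j = \<mu> i + 1 then 1
        else if 2 \<le> i \<and> \<mu> (i - 1) > \<mu> i \<and> j = \<mu> (i - 1) + 1 then -1
        else 0)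
     else 0)"

definition PASM :: "(nat \<Rightarrow> nat) \<Rightarrow> (nat \<Rightarrow> nat) \<Rightarrow> nat \<Rightarrow> nat \<Rightarrow> (nat \<times> nat \<Rightarrow> real) set" where
  "PASM \<nu> la m n = conv_hull {Mmat \<mu> m n | \<mu>. is_partition \<mu> \<and> part_le la \<mu> \<and> part_le \<mu> \<nu>}"

definition order_polytope :: "'a set \<Rightarrow> ('a \<Rightarrow> 'a \<Rightarrow> bool) \<Rightarrow> ('a \<Rightarrow> real) set" where
  "order_polytope P le = {f \<in> RI P. (\<forall>p\<in>P. 0 \<le> f p \<and> f p \<le> 1) \<and>
                                    (\<forall>p\<in>P. \<forall>q\<in>P. le p q \<longrightarrow> f p \<le> f q)}"

end

theory Submission
  imports Defs
begin

lemma conv_sub_aff: "conv_hull S \<subseteq> aff_hull S"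
  unfolding conv_hull_def aff_hull_def by blast

lemma in_conv: assumes "v \<in> S" shows "v \<in> conv_hull S"
  unfolding conv_hull_def
  by (rule CollectI, rule exI[of _ "{v}"], rule exI[of _ "\<lambda>_. 1"]) (use assms in auto)

lemma aff_mono: "S \<subseteq> T \<Longrightarrow> aff_hull S \<subseteq> aff_hull T"
  unfolding aff_hull_def by blast

lemma sum_if_sub: "finite A \<Longrightarrow> B \<subseteq> A \<Longrightarrow> (\<Sum>v\<in>A. if v \<in> B then g v else 0) = sum g B"
  by (simp add: sum.inter_restrict[symmetric] Int_absorb1)

lemma aff_conv: assumes "x \<in> aff_hull (conv_hull S)" shows "x \<in> aff_hull S"
proof -
  obtain F c where F: "finite F" "F \<subseteq> conv_hull S" "sum c F = 1" and x: "x = (\<lambda>p. \<Sum>v\<in>F. c v * v p)"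
    using assms unfolding aff_hull_def by blast
  have "\<forall>u\<in>F. \<exists>G d. finite G \<and> G \<subseteq> S \<and> sum d G = 1 \<and> u = (\<lambda>p. \<Sum>v\<in>G. d v * v p)"
    using F(2) unfolding conv_hull_def by blast
  then have "\<exists>G. \<forall>u\<in>F. \<exists>d. finite (G u) \<and> G u \<subseteq> S \<and> sum d (G u) = 1 \<and> u = (\<lambda>p. \<Sum>v\<in>G u. d v * v p)"
    by (rule bchoice)
  then obtain G where "\<forall>u\<in>F. \<exists>d. finite (G u) \<and> G u \<subseteq> S \<and> sum d (G u) = 1 \<and> u = (\<lambda>p. \<Sum>v\<in>G u. d v * v p)"
    by blast
  then have "\<exists>d. \<forall>u\<in>F. finite (G u) \<and> G u \<subseteq> S \<and> sum (d u) (G u) = 1 \<and> u = (\<lambda>p. \<Sum>v\<in>G u. d u v * v p)"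
    by (rule bchoice)
  then obtain d where Gd0: "\<forall>u\<in>F. finite (G u) \<and> G u \<subseteq> S \<and> sum (d u) (G u) = 1 \<and> u = (\<lambda>p. \<Sum>v\<in>G u. d u v * v p)"
    by blast
  have Gd: "\<And>u. u\<in>F \<Longrightarrow> finite (G u) \<and> G u \<subseteq> S \<and> sum (d u) (G u) = 1 \<and> u = (\<lambda>p. \<Sum>v\<in>G u. d u v * v p)"
    using Gd0 by blast
  define H where "H = (\<Union>u\<in>F. G u)"
  define e where "e v = (\<Sum>u\<in>F. c u * (if v \<in> G u then d u v else 0))" for v
  have finH: "finite H" using F(1) Gd unfolding H_def by blast
  have HS: "H \<subseteq> S" using Gd unfolding H_def by blast
  have GH: "\<And>u. u \<in> F \<Longrightarrow> G u \<subseteq> H" unfolding H_def by blast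
  have one: "(\<Sum>v\<in>H. (if v \<in> G u then d u v else 0)) = 1" if "u \<in> F" for u
  proof -
    have "sum (d u) (G u) = 1" using Gd[OF that] by blast
    then show ?thesis using sum_if_sub[OF finH GH[OF that], of "d u"] by simp
  qed
  have two: "u p = (\<Sum>v\<in>H. (if v \<in> G u then d u v else 0) * v p)" if "u \<in> F" for u p
  proof -
    have "u p = (\<Sum>v\<in>G u. d u v * v p)" using Gd[OF that] by (metis (no_types, lifting))
    also have "\<dots> = (\<Sum>v\<in>H. (if v \<in> G u then d u v * v p else 0))"
      using sum_if_sub[OF finH GH[OF that], of "\<lambda>v. d u v * v p"] by simp
    moreover have "\<And>v. (if v \<in> G u then d u v else 0) * v p = (if v\<in>G u then d u v * v p else 0)" by simp
    ultimately show ?thesis by simp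
  qed
  have "sum e H = (\<Sum>u\<in>F. c u * (\<Sum>v\<in>H. (if v \<in> G u then d u v else 0)))"
    unfolding e_def by (simp add: sum_distrib_left sum.swap[of _ H])
  also have "\<dots> = 1" using one F(3) by simp
  finally have se: "sum e H = 1" .
  have "x = (\<lambda>p. \<Sum>v\<in>H. e v * v p)"
  proof
    fix p
    have "x p = (\<Sum>u\<in>F. c u * (\<Sum>v\<in>H. (if v \<in> G u then d u v else 0) * v p))"
      using x two by simp
    also have "\<dots> = (\<Sum>v\<in>H. e v * v p)"
      unfolding e_def by (simp add: sum_distrib_left sum_distrib_right sum.swap[of _ H] mult.assoc)
    finally show "x p = (\<Sum>v\<in>H. e v * v p)" .
  qed
  then show ?thesis unfolding aff_hull_def using finH HS se by blast
qed

lemma conv_convex: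
  assumes "x \<in> conv_hull S" "y \<in> conv_hull S" "0 \<le> t" "t \<le> 1"
  shows "(\<lambda>p. t * x p + (1 - t) * y p) \<in> conv_hull S"
proof -
  obtain F c where F: "finite F" "F \<subseteq> S" "\<forall>v\<in>F. c v \<ge> 0" "sum c F = 1" and x: "x = (\<lambda>p. \<Sum>v\<in>F. c v * v p)"
    using assms(1) unfolding conv_hull_def by blast
  obtain G d where G: "finite G" "G \<subseteq> S" "\<forall>v\<in>G. d v \<ge> 0" "sum d G = 1" and y: "y = (\<lambda>p. \<Sum>v\<in>G. d v * v p)"
    using assms(2) unfolding conv_hull_def by blast
  define H where "H = F \<union> G"
  define e where "e v = t * (if v \<in> F then c v else 0) + (1 - t) * (if v \<in> G then d v else 0)" for v
  have finH: "finite H" using F G H_def by simp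
  have sF: "(\<Sum>v\<in>H. (if v \<in> F then g v else 0)) = sum g F" for g :: "_ \<Rightarrow> real"
    using sum_if_sub[OF finH, of F g] H_def by simp
  have sG: "(\<Sum>v\<in>H. (if v \<in> G then g v else 0)) = sum g G" for g :: "_ \<Rightarrow> real"
    using sum_if_sub[OF finH, of G g] H_def by simp
  have "sum e H = t * sum c F + (1 - t) * sum d G"
    unfolding e_def by (simp add: sum.distrib sum_distrib_left[symmetric] sF sG)
  then have se: "sum e H = 1" using F G by simp
  have ep: "\<forall>v\<in>H. e v \<ge> 0" using F(3) G(3) assms(3,4) unfolding e_def by auto
  have "(\<lambda>p. t * x p + (1 - t) * y p) = (\<lambda>p. \<Sum>v\<in>H. e v * v p)"
  proof
    fix p
    have ev: "e v * v p = t * (if v \<in> F then c v * v p else 0) + (1 - t) * (if v \<in> G then d v * v p else 0)" for v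
      unfolding e_def by (auto simp: algebra_simps)
    have "(\<Sum>v\<in>H. e v * v p) = t * (\<Sum>v\<in>H. (if v \<in> F then c v * v p else 0)) + (1 - t) * (\<Sum>v\<in>H. (if v \<in> G then d v * v p else 0))"
      unfolding ev by (simp add: sum.distrib sum_distrib_left)
    also have "\<dots> = t * x p + (1 - t) * y p" using sF sG x y by simp
    finally show "t * x p + (1 - t) * y p = (\<Sum>v\<in>H. e v * v p)" by simp
  qed
  then show ?thesis unfolding conv_hull_def using finH ep se F(2) G(2) H_def by blast
qed


lemma image_comb:
  fixes f :: "('a \<Rightarrow> real) \<Rightarrow> 'b \<Rightarrow> real"
  assumes lin: "\<And>F c. finite F \<Longrightarrow> f (\<lambda>p. \<Sum>v\<in>F. c v * v p) = (\<lambda>q. \<Sum>v\<in>F. c v * f v q)"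
    and F: "finite F"
  shows "f (\<lambda>p. \<Sum>v\<in>F. c v * v p) = (\<lambda>q. \<Sum>w\<in>f ` F. (\<Sum>v\<in>{v\<in>F. f v = w}. c v) * w q)"
proof
  fix q
  have "f (\<lambda>p. \<Sum>v\<in>F. c v * v p) q = (\<Sum>v\<in>F. c v * f v q)" using lin[OF F] by simp
  also have "\<dots> = (\<Sum>w\<in>f ` F. \<Sum>v\<in>{v\<in>F. f v = w}. c v * f v q)"
    by (rule sum.image_gen[OF F])
  also have "\<dots> = (\<Sum>w\<in>f ` F. \<Sum>v\<in>{v\<in>F. f v = w}. c v * w q)"
    by (rule sum.cong) (auto intro!: sum.cong)
  also have "\<dots> = (\<Sum>w\<in>f ` F. (\<Sum>v\<in>{v\<in>F. f v = w}. c v) * w q)"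
    by (rule sum.cong[OF refl], rule sum_distrib_right[symmetric])
  finally show "f (\<lambda>p. \<Sum>v\<in>F. c v * v p) q = (\<Sum>w\<in>f ` F. (\<Sum>v\<in>{v\<in>F. f v = w}. c v) * w q)" .
qed

lemma image_comb2:
  fixes f :: "('a \<Rightarrow> real) \<Rightarrow> 'b \<Rightarrow> real"
  assumes lin: "\<And>F c. finite F \<Longrightarrow> f (\<lambda>p. \<Sum>v\<in>F. c v * v p) = (\<lambda>q. \<Sum>v\<in>F. c v * f v q)"
    and F: "finite F" "F \<subseteq> f ` S"
  defines "g \<equiv> inv_into S f"
  shows "(\<lambda>p. \<Sum>w\<in>F. a w * w p) = f (\<lambda>p. \<Sum>v\<in>g ` F. a (f v) * v p)"
    and "g ` F \<subseteq> S" "finite (g ` F)" "sum (\<lambda>v. a (f v)) (g ` F) = sum a F"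
proof -
  have inj: "inj_on g F" unfolding g_def using F(2) by (rule inj_on_inv_into)
  have fg: "f (g w) = w" if "w \<in> F" for w
  proof -
    have "w \<in> f ` S" using F(2) that by blast
    then show ?thesis unfolding g_def by (rule f_inv_into_f)
  qed
  show "g ` F \<subseteq> S" unfolding g_def using F(2) by (auto intro: inv_into_into)
  show "finite (g ` F)" using F by simp
  show "sum (\<lambda>v. a (f v)) (g ` F) = sum a F"
    using sum.reindex[OF inj, of "\<lambda>v. a (f v)"] fg by simp
  show "(\<lambda>p. \<Sum>w\<in>F. a w * w p) = f (\<lambda>p. \<Sum>v\<in>g ` F. a (f v) * v p)"
  proof -
    have "f (\<lambda>p. \<Sum>v\<in>g ` F. a (f v) * v p) = (\<lambda>q. \<Sum>v\<in>g ` F. a (f v) * f v q)"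
      using lin F(1) by simp
    also have "\<dots> = (\<lambda>q. \<Sum>w\<in>F. a (f (g w)) * f (g w) q)"
      by (simp add: sum.reindex[OF inj])
    also have "\<dots> = (\<lambda>q. \<Sum>w\<in>F. a w * w q)" using fg by simp
    finally show ?thesis by simp
  qed
qed

lemma conv_image:
  fixes f :: "('a \<Rightarrow> real) \<Rightarrow> 'b \<Rightarrow> real"
  assumes lin: "\<And>F c. finite F \<Longrightarrow> f (\<lambda>p. \<Sum>v\<in>F. c v * v p) = (\<lambda>q. \<Sum>v\<in>F. c v * f v q)"
  shows "f ` conv_hull S = conv_hull (f ` S)"
proof
  show "f ` conv_hull S \<subseteq> conv_hull (f ` S)"
  proof
    fix y assume "y \<in> f ` conv_hull S"
    then obtain F c where F: "finite F" "F \<subseteq> S" "\<forall>v\<in>F. c v \<ge> 0" "sum c F = 1" and y: "y = f (\<lambda>p. \<Sum>v\<in>F. c v * v p)"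
      unfolding conv_hull_def by blast
    define c' where "c' w = (\<Sum>v\<in>{v\<in>F. f v = w}. c v)" for w
    have "y = (\<lambda>q. \<Sum>w\<in>f ` F. c' w * w q)" using image_comb[OF lin F(1)] y c'_def by simp
    moreover have "sum c' (f ` F) = 1" using sum.image_gen[OF F(1), of c f] F(4) c'_def by simp
    moreover have "\<forall>w\<in>f ` F. c' w \<ge> 0" using F(3) c'_def by (auto intro!: sum_nonneg)
    ultimately show "y \<in> conv_hull (f ` S)" unfolding conv_hull_def using F(1,2)
      by (intro CollectI exI[of _ "f ` F"] exI[of _ c']) auto
  qed
  show "conv_hull (f ` S) \<subseteq> f ` conv_hull S"
  proof
    fix x assume "x \<in> conv_hull (f ` S)"
    then obtain F c where F: "finite F" "F \<subseteq> f ` S" "\<forall>v\<in>F. c v \<ge> 0" "sum c F = 1" and x: "x = (\<lambda>p. \<Sum>v\<in>F. c v * v p)"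
      unfolding conv_hull_def by blast
    note I = image_comb2[OF lin F(1,2)]
    have "(\<lambda>p. \<Sum>v\<in>inv_into S f ` F. c (f v) * v p) \<in> conv_hull S"
      unfolding conv_hull_def using I F(3,4) F(2)
      by (intro CollectI exI[of _ "inv_into S f ` F"] exI[of _ "\<lambda>v. c (f v)"]) (auto simp: f_inv_into_f subset_iff)
    then show "x \<in> f ` conv_hull S" using I(1)[where a=c] x by auto
  qed
qed

lemma aff_image:
  fixes f :: "('a \<Rightarrow> real) \<Rightarrow> 'b \<Rightarrow> real"
  assumes lin: "\<And>F c. finite F \<Longrightarrow> f (\<lambda>p. \<Sum>v\<in>F. c v * v p) = (\<lambda>q. \<Sum>v\<in>F. c v * f v q)"
  shows "f ` aff_hull S = aff_hull (f ` S)"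
proof
  show "f ` aff_hull S \<subseteq> aff_hull (f ` S)"
  proof
    fix y assume "y \<in> f ` aff_hull S"
    then obtain F c where F: "finite F" "F \<subseteq> S" "sum c F = 1" and y: "y = f (\<lambda>p. \<Sum>v\<in>F. c v * v p)"
      unfolding aff_hull_def by blast
    define c' where "c' w = (\<Sum>v\<in>{v\<in>F. f v = w}. c v)" for w
    have "y = (\<lambda>q. \<Sum>w\<in>f ` F. c' w * w q)" using image_comb[OF lin F(1)] y c'_def by simp
    moreover have "sum c' (f ` F) = 1" using sum.image_gen[OF F(1), of c f] F(3) c'_def by simp
    ultimately show "y \<in> aff_hull (f ` S)" unfolding aff_hull_def using F(1,2)
      by (intro CollectI exI[of _ "f ` F"] exI[of _ c']) auto
  qed
  show "aff_hull (f ` S) \<subseteq> f ` aff_hull S"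
  proof
    fix x assume "x \<in> aff_hull (f ` S)"
    then obtain F c where F: "finite F" "F \<subseteq> f ` S" "sum c F = 1" and x: "x = (\<lambda>p. \<Sum>v\<in>F. c v * v p)"
      unfolding aff_hull_def by blast
    note I = image_comb2[OF lin F(1,2)]
    have "(\<lambda>p. \<Sum>v\<in>inv_into S f ` F. c (f v) * v p) \<in> aff_hull S"
      unfolding aff_hull_def using I F(3)
      by (intro CollectI exI[of _ "inv_into S f ` F"] exI[of _ "\<lambda>v. c (f v)"]) auto
    then show "x \<in> f ` aff_hull S" using I(1)[where a=c] x by auto
  qed
qed

lemma aff_RI: assumes "S \<subseteq> RI I" shows "aff_hull S \<subseteq> RI I"
  using assms unfolding aff_hull_def RI_def by (auto intro!: sum.neutral)



definition SS :: "(nat \<times> nat \<Rightarrow> real) \<Rightarrow> nat \<Rightarrow> nat \<Rightarrow> real" where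
  "SS x i j = (\<Sum>i'\<in>{1..i}. \<Sum>j'\<in>{1..j}. x (i', j'))"

definition Fm :: "(nat \<times> nat) set \<Rightarrow> (nat \<times> nat \<Rightarrow> real) \<Rightarrow> (nat \<times> nat \<Rightarrow> real)" where
  "Fm P x = (\<lambda>q. if q \<in> P then SS x (fst q) (snd q) else 0)"

lemma RI_zero: "x \<in> RI I \<Longrightarrow> p \<notin> I \<Longrightarrow> x p = 0"
  unfolding RI_def by blast

definition ind :: "'a set \<Rightarrow> 'a \<Rightarrow> real" where
  "ind A = (\<lambda>p. if p \<in> A then 1 else 0)"

lemma SS_lin: "finite F \<Longrightarrow> SS (\<lambda>p. \<Sum>v\<in>F. c v * v p) i j = (\<Sum>v\<in>F. c v * SS v i j)"
  unfolding SS_def by (simp add: sum_distrib_left sum.swap[of _ F] sum.swap[of _ "{1..j}"])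

lemma Fm_lin: "finite F \<Longrightarrow> Fm P (\<lambda>p. \<Sum>v\<in>F. c v * v p) = (\<lambda>q. \<Sum>v\<in>F. c v * Fm P v q)"
  unfolding Fm_def by (auto simp: SS_lin)

lemma SS_two: "SS (\<lambda>p. t * x p + (1 - t) * y p) i j = t * SS x i j + (1 - t) * SS y i j"
  unfolding SS_def by (simp add: sum.distrib sum_distrib_left)

lemma SS_rec: "x (Suc a, Suc b) = SS x (Suc a) (Suc b) - SS x a (Suc b) - SS x (Suc a) b + SS x a b"
proof -
  have r: "SS x (Suc a) j = SS x a j + (\<Sum>j'\<in>{1..j}. x (Suc a, j'))" for j
    unfolding SS_def by (simp add: sum.cl_ivl_Suc)
  have "(\<Sum>j'\<in>{1..Suc b}. x (Suc a, j')) = (\<Sum>j'\<in>{1..b}. x (Suc a, j')) + x (Suc a, Suc b)"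
    by (simp add: sum.cl_ivl_Suc)
  then show ?thesis using r[of "Suc b"] r[of b] by simp
qed

lemma SS_zero1[simp]: "SS x 0 j = 0" and SS_zero2[simp]: "SS x i 0 = 0"
  unfolding SS_def by simp_all

lemma SS_int: "(\<forall>p. x p \<in> \<int>) \<Longrightarrow> SS x i j \<in> \<int>"
  unfolding SS_def by (intro Ints_sum) auto

lemma part_anti: assumes "is_partition \<mu>" "1 \<le> i" "i \<le> k" shows "\<mu> k \<le> \<mu> i"
  using assms(3)
proof (induction k rule: dec_induct)
  case base then show ?case by simp
next
  case (step k)
  have "\<mu> (Suc k) \<le> \<mu> k" using assms(1,2) step(1) unfolding is_partition_def by auto
  then show ?case using step by simp
qed

lemma Mcol:
  assumes "is_partition \<mu>" "\<forall>i\<ge>1. \<mu> i \<le> n - 1" "1 \<le> n" "1 \<le> j" "j \<le> n"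
  shows "1 \<le> i \<Longrightarrow> i \<le> m \<Longrightarrow> (\<Sum>i'\<in>{1..i}. Mmat \<mu> m n (i', j)) = (if j = \<mu> i + 1 then 1 else 0)"
proof (induction i)
  case 0 then show ?case by simp
next
  case (Suc k)
  show ?case
  proof (cases "k = 0")
    case True
    then show ?thesis using Suc.prems assms unfolding Mmat_def by auto
  next
    case False
    have le: "\<mu> (Suc k) \<le> \<mu> k" using assms(1) False unfolding is_partition_def by auto
    have b1: "\<mu> k \<le> n - 1" "\<mu> (Suc k) \<le> n - 1" using assms(2) False by auto
    have "(\<Sum>i'\<in>{1..Suc k}. Mmat \<mu> m n (i', j)) = (\<Sum>i'\<in>{1..k}. Mmat \<mu> m n (i', j)) + Mmat \<mu> m n (Suc k, j)"
      by (simp add: sum.cl_ivl_Suc)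
    also have "\<dots> = (if j = \<mu> k + 1 then 1 else 0) + Mmat \<mu> m n (Suc k, j)"
      using Suc False by simp
    also have "\<dots> = (if j = \<mu> (Suc k) + 1 then 1 else 0)"
      using le False Suc.prems assms(4,5) unfolding Mmat_def by auto
    finally show ?thesis .
  qed
qed

lemma SS_M:
  assumes "is_partition \<mu>" "\<forall>i\<ge>1. \<mu> i \<le> n - 1" "1 \<le> n" "1 \<le> i" "i \<le> m" "j \<le> n"
  shows "SS (Mmat \<mu> m n) i j = (if \<mu> i < j then 1 else 0)"
proof -
  have "SS (Mmat \<mu> m n) i j = (\<Sum>j'\<in>{1..j}. \<Sum>i'\<in>{1..i}. Mmat \<mu> m n (i', j'))"
    unfolding SS_def by (rule sum.swap)
  also have "\<dots> = (\<Sum>j'\<in>{1..j}. if j' = \<mu> i + 1 then 1 else 0)"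
    using Mcol[OF assms(1-3)] assms(4-6) by (intro sum.cong) auto
  also have "\<dots> = (if \<mu> i < j then 1 else 0)" by (simp add: sum.delta)
  finally show ?thesis .
qed


locale pctx =
  fixes m n :: nat and la \<nu> :: "nat \<Rightarrow> nat"
  assumes m1: "m \<ge> 1" and n1: "n \<ge> 1"
    and pla: "is_partition la" and pnu: "is_partition \<nu>"
    and lanu: "part_le la \<nu>" and box: "in_box \<nu> (n - 1) (m - 1)"
begin

definition "P = skew_cells \<nu> la"
definition "B = ({1..m} \<times> {1..n} :: (nat \<times> nat) set)"
definition "Parts = {\<mu>. is_partition \<mu> \<and> part_le la \<mu> \<and> part_le \<mu> \<nu>}"
definition "V = {Mmat \<mu> m n | \<mu>. is_partition \<mu> \<and> part_le la \<mu> \<and> part_le \<mu> \<nu>}"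
definition "OP = order_polytope P pos_le"

lemma nu_bd: "i \<ge> 1 \<Longrightarrow> \<nu> i \<le> n - 1" and nu_zero: "i > m - 1 \<Longrightarrow> \<nu> i = 0"
  using box unfolding in_box_def by auto

lemma P_B: "P \<subseteq> B"
proof
  fix q assume "q \<in> P"
  then obtain i j where q: "q = (i, j)" "i \<ge> 1" "1 \<le> j" "j \<le> \<nu> i" "\<not> j \<le> la i"
    unfolding P_def skew_cells_def by auto
  have "i \<le> m" using nu_zero[of i] q by (cases "i > m - 1") auto
  moreover have "j \<le> n" using nu_bd[of i] q n1 by auto
  ultimately show "q \<in> B" using q unfolding B_def by auto
qed

lemma finP: "finite P" using P_B finite_subset unfolding B_def by blast

lemma mu_bd: assumes "\<mu> \<in> Parts" shows "\<forall>i\<ge>1. \<mu> i \<le> n - 1"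
proof (intro allI impI)
  fix i :: nat assume i: "1 \<le> i"
  then have "\<mu> i \<le> \<nu> i" using assms unfolding Parts_def part_le_def by auto
  then show "\<mu> i \<le> n - 1" using nu_bd[OF i] by linarith
qed

lemma V_Parts: "V = (\<lambda>\<mu>. Mmat \<mu> m n) ` Parts"
  unfolding V_def Parts_def by auto

lemma skew_sub: "\<mu> \<in> Parts \<Longrightarrow> skew_cells \<nu> \<mu> \<subseteq> P"
  unfolding Parts_def P_def skew_cells_def part_le_def by (auto dest: le_trans)

lemma Fm_M: assumes "\<mu> \<in> Parts" shows "Fm P (Mmat \<mu> m n) = ind (skew_cells \<nu> \<mu>)"
proof
  fix q :: "nat \<times> nat"
  obtain i j where q: "q = (i, j)" by force
  show "Fm P (Mmat \<mu> m n) q = ind (skew_cells \<nu> \<mu>) q"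
  proof (cases "q \<in> P")
    case True
    then have "q \<in> B" using P_B by auto
    then have ij: "1 \<le> i" "i \<le> m" "j \<le> n" "1 \<le> j" using q unfolding B_def by auto
    have pm: "is_partition \<mu>" using assms unfolding Parts_def by auto
    have "Fm P (Mmat \<mu> m n) q = (if \<mu> i < j then 1 else 0)"
      using SS_M[OF pm mu_bd[OF assms] n1 ij(1-3)] True q unfolding Fm_def by simp
    also have "\<dots> = ind (skew_cells \<nu> \<mu>) q"
      using True q unfolding ind_def P_def skew_cells_def by auto
    finally show ?thesis .
  next
    case False
    then show ?thesis using skew_sub[OF assms] unfolding Fm_def ind_def by auto
  qed
qed

lemma V_RI: "V \<subseteq> RI B"
  unfolding V_def RI_def B_def Mmat_def by auto

lemma affV_RI: "aff_hull V \<subseteq> RI B" using aff_RI[OF V_RI] .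

lemma SS_const:
  assumes "x \<in> aff_hull V" "1 \<le> i" "i \<le> m" "1 \<le> j" "j \<le> n" "(i, j) \<notin> P"
  shows "SS x i j = (if j \<le> la i then 0 else 1)"
proof -
  obtain F c where F: "finite F" "F \<subseteq> V" "sum c F = 1" and x: "x = (\<lambda>p. \<Sum>v\<in>F. c v * v p)"
    using assms(1) unfolding aff_hull_def by blast
  have vals: "SS v i j = (if j \<le> la i then 0 else 1)" if vV: "v \<in> V" for v
  proof -
    obtain \<mu> where mu: "\<mu> \<in> Parts" "v = Mmat \<mu> m n" using vV unfolding V_Parts by blast
    have pm: "is_partition \<mu>" and lm: "la i \<le> \<mu> i" and mn: "\<mu> i \<le> \<nu> i"
      using mu(1) assms(2) unfolding Parts_def part_le_def by auto
    have "SS v i j = (if \<mu> i < j then 1 else 0)"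
      using SS_M[OF pm mu_bd[OF mu(1)] n1 assms(2,3,5)] mu(2) by simp
    moreover have "j \<le> la i \<or> j > \<nu> i" using assms(2,4,6) unfolding P_def skew_cells_def by auto
    ultimately show ?thesis using lm mn by auto
  qed
  have "SS x i j = (\<Sum>v\<in>F. c v * SS v i j)" using SS_lin[OF F(1)] x by simp
  also have "\<dots> = (\<Sum>v\<in>F. c v * (if j \<le> la i then 0 else 1))"
    using vals F(2) by (intro sum.cong) auto
  also have "\<dots> = (if j \<le> la i then 0 else 1)" using F(3) by (simp add: sum_distrib_right[symmetric])
  finally show ?thesis .
qed

lemma SS_det:
  assumes "x \<in> aff_hull V" "i \<le> m" "j \<le> n"
  shows "SS x i j = (if i = 0 \<or> j = 0 then 0 else if (i, j) \<in> P then Fm P x (i, j)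
                      else if j \<le> la i then 0 else 1)"
  using SS_const[OF assms(1) _ assms(2) _ assms(3)] unfolding Fm_def by auto

lemma inj_affV: "inj_on (Fm P) (aff_hull V)"
proof
  fix x y assume xy: "x \<in> aff_hull V" "y \<in> aff_hull V" "Fm P x = Fm P y"
  show "x = y"
  proof
    fix q :: "nat \<times> nat"
    obtain i j where q: "q = (i, j)" by force
    show "x q = y q"
    proof (cases "q \<in> B")
      case True
      then obtain a b where ab: "i = Suc a" "j = Suc b" "Suc a \<le> m" "Suc b \<le> n"
        using q unfolding B_def by (cases i; cases j) auto
      have e: "SS x i' j' = SS y i' j'" if "i' \<le> m" "j' \<le> n" for i' j'
        using SS_det[OF xy(1) that] SS_det[OF xy(2) that] xy(3) by simp
      show ?thesis using SS_rec[of x a b] SS_rec[of y a b] e ab q by simp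
    next
      case False
      have "x \<in> RI B" "y \<in> RI B" using xy(1,2) affV_RI by auto
      then show ?thesis using False unfolding RI_def by (cases q) auto
    qed
  qed
qed

lemma int_affV:
  assumes "x \<in> aff_hull V" "\<forall>q. Fm P x q \<in> \<int>"
  shows "x \<in> ZI B"
proof -
  have RIx: "x \<in> RI B" using assms(1) affV_RI by auto
  have e: "SS x i' j' \<in> \<int>" if "i' \<le> m" "j' \<le> n" for i' j'
    using SS_det[OF assms(1) that] assms(2) by simp
  have "x q \<in> \<int>" for q
  proof (cases "q \<in> B")
    case True
    obtain i j where q: "q = (i, j)" by force
    then obtain a b where ab: "i = Suc a" "j = Suc b" "Suc a \<le> m" "Suc b \<le> n"
      using True unfolding B_def by (cases i; cases j) auto
    show ?thesis using SS_rec[of x a b] e ab q by simp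
  next
    case False
    then show ?thesis using RIx unfolding RI_def by (cases q) auto
  qed
  then show ?thesis using RIx unfolding ZI_def by auto
qed


lemma ind_skew_OP: assumes "\<mu> \<in> Parts" shows "ind (skew_cells \<nu> \<mu>) \<in> OP"
proof -
  have pm: "is_partition \<mu>" using assms unfolding Parts_def by auto
  have sub: "skew_cells \<nu> \<mu> \<subseteq> P" using skew_sub[OF assms] .
  have mono: "q \<in> skew_cells \<nu> \<mu>" if "p \<in> skew_cells \<nu> \<mu>" "q \<in> P" "pos_le p q" for p q
  proof -
    obtain i j where p: "p = (i, j)" by force
    obtain i' j' where q: "q = (i', j')" by force
    have "i \<ge> 1" "j > \<mu> i" "i \<le> i'" "j \<le> j'" using that p q unfolding skew_cells_def pos_le_def by auto
    moreover have "\<mu> i' \<le> \<mu> i" using part_anti[OF pm] calculation by auto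
    moreover have "i' \<ge> 1" "j' \<le> \<nu> i'" using that(2) q unfolding P_def skew_cells_def by auto
    ultimately show ?thesis using q unfolding skew_cells_def by auto
  qed
  show ?thesis unfolding OP_def order_polytope_def RI_def ind_def
    using sub mono by auto
qed

lemma FV_OP: "Fm P ` V \<subseteq> OP"
  using ind_skew_OP Fm_M unfolding V_Parts by auto

lemma conv_OP: assumes "S \<subseteq> order_polytope Q le" shows "conv_hull S \<subseteq> order_polytope Q le"
proof
  fix x assume "x \<in> conv_hull S"
  then obtain F c where F: "finite F" "F \<subseteq> S" "\<forall>v\<in>F. c v \<ge> 0" "sum c F = 1" and x: "x = (\<lambda>p. \<Sum>v\<in>F. c v * v p)"
    unfolding conv_hull_def by blast
  have vO: "v \<in> order_polytope Q le" if "v \<in> F" for v using F(2) assms that by auto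
  have "x \<in> RI Q" using vO unfolding x RI_def order_polytope_def by (auto intro!: sum.neutral)
  moreover have "0 \<le> x p" if "p \<in> Q" for p
    unfolding x using vO F(3) that unfolding order_polytope_def by (auto intro!: sum_nonneg)
  moreover have "x p \<le> 1" if "p \<in> Q" for p
  proof -
    have "(\<Sum>v\<in>F. c v * v p) \<le> (\<Sum>v\<in>F. c v * 1)"
      using vO F(3) that unfolding order_polytope_def by (intro sum_mono mult_left_mono) auto
    then show ?thesis using F(4) x by simp
  qed
  moreover have "x p \<le> x q" if "p \<in> Q" "q \<in> Q" "le p q" for p q
    unfolding x using vO F(3) that unfolding order_polytope_def by (intro sum_mono mult_left_mono) auto
  ultimately show "x \<in> order_polytope Q le" unfolding order_polytope_def by auto
qed

lemma filter_mu:
  assumes U: "U \<subseteq> P" and up: "\<forall>p\<in>U. \<forall>q\<in>P. pos_le p q \<longrightarrow> q \<in> U"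
  shows "\<exists>\<mu>\<in>Parts. skew_cells \<nu> \<mu> = U"
proof -
  define D where "D i = insert (la i) {j. (i, j) \<in> P - U}" for i
  define \<mu> where "\<mu> i = (if i = 0 then 0 else Max (D i))" for i
  have finD: "finite (D i)" for i
  proof -
    have "{j. (i, j) \<in> P - U} \<subseteq> {..\<nu> i}" unfolding P_def skew_cells_def by auto
    then show ?thesis unfolding D_def using finite_subset by auto
  qed
  have lam: "la i \<le> \<mu> i" if "i \<ge> 1" for i using that finD unfolding \<mu>_def D_def by auto
  have PUm: "j \<le> \<mu> i" if "(i, j) \<in> P - U" for i j
  proof -
    have "i \<ge> 1" using that unfolding P_def skew_cells_def by auto
    then show ?thesis using that finD unfolding \<mu>_def D_def by auto
  qed
  have cases_m: "\<mu> i = la i \<or> (i, \<mu> i) \<in> P - U" if "i \<ge> 1" for i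
  proof -
    have "Max (D i) \<in> D i" using finD by (intro Max_in) (auto simp: D_def)
    then show ?thesis using that unfolding \<mu>_def D_def by auto
  qed
  have lanu_i: "la i \<le> \<nu> i" if "i \<ge> 1" for i using lanu that unfolding part_le_def by auto
  have mnu: "\<mu> i \<le> \<nu> i" if "i \<ge> 1" for i
    using cases_m[OF that] lanu_i[OF that] unfolding P_def skew_cells_def by auto
  have m0: "\<mu> 0 = 0" unfolding \<mu>_def by simp
  have mdec: "\<mu> (Suc i) \<le> \<mu> i" if "i \<ge> 1" for i
  proof -
    have lad: "la (Suc i) \<le> la i" using pla that unfolding is_partition_def by auto
    have nud: "\<nu> (Suc i) \<le> \<nu> i" using pnu that unfolding is_partition_def by auto
    show ?thesis
    proof (cases "\<mu> (Suc i) = la (Suc i)")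
      case True then show ?thesis using lad lam[OF that] by simp
    next
      case False
      define j where "j = \<mu> (Suc i)"
      have jP: "(Suc i, j) \<in> P - U" using cases_m[of "Suc i"] False unfolding j_def by auto
      then have j: "1 \<le> j" "j \<le> \<nu> (Suc i)" unfolding P_def skew_cells_def by auto
      show ?thesis
      proof (cases "j \<le> la i")
        case True then show ?thesis using lam[OF that] unfolding j_def by simp
      next
        case False
        have iP: "(i, j) \<in> P" using False j nud that unfolding P_def skew_cells_def by auto
        have "(i, j) \<notin> U"
        proof
          assume "(i, j) \<in> U"
          then have "(Suc i, j) \<in> U" using up jP unfolding pos_le_def by auto
          then show False using jP by auto
        qed
        then have "j \<le> \<mu> i" using PUm iP by auto
        then show ?thesis unfolding j_def .
      qed
    qed
  qed
  have fin: "finite {i. \<mu> i \<noteq> 0}"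
  proof -
    have "{i. \<mu> i \<noteq> 0} \<subseteq> {i. \<nu> i \<noteq> 0}" using mnu m0 by (auto, metis le_zero_eq less_one not_less)
    then show ?thesis using pnu finite_subset unfolding is_partition_def by auto
  qed
  have mP: "\<mu> \<in> Parts" unfolding Parts_def is_partition_def part_le_def
    using m0 mdec fin lam mnu by auto
  have "skew_cells \<nu> \<mu> = U"
  proof
    show "skew_cells \<nu> \<mu> \<subseteq> U"
    proof
      fix q assume q: "q \<in> skew_cells \<nu> \<mu>"
      obtain i j where ij: "q = (i, j)" by force
      have h: "i \<ge> 1" "1 \<le> j" "j \<le> \<nu> i" "\<mu> i < j" using q ij unfolding skew_cells_def by auto
      have "(i, j) \<in> P" using h lam[OF h(1)] unfolding P_def skew_cells_def by auto
      then show "q \<in> U" using PUm[of i j] h ij by auto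
    qed
    show "U \<subseteq> skew_cells \<nu> \<mu>"
    proof
      fix q assume qU: "q \<in> U"
      obtain i j where ij: "q = (i, j)" by force
      have h: "i \<ge> 1" "1 \<le> j" "j \<le> \<nu> i" "la i < j" using qU U ij unfolding P_def skew_cells_def by auto
      have "\<not> j \<le> \<mu> i"
      proof
        assume jm: "j \<le> \<mu> i"
        from cases_m[OF h(1)] show False
        proof
          assume "\<mu> i = la i" then show False using jm h by simp
        next
          assume mi: "(i, \<mu> i) \<in> P - U"
          then have "(i, \<mu> i) \<in> U" using up qU ij jm unfolding pos_le_def by auto
          then show False using mi by auto
        qed
      qed
      then show "q \<in> skew_cells \<nu> \<mu>" using h ij unfolding skew_cells_def by auto
    qed
  qed
  then show ?thesis using mP by blast
qed

lemma filter_in: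
  assumes "U \<subseteq> P" "\<forall>p\<in>U. \<forall>q\<in>P. pos_le p q \<longrightarrow> q \<in> U"
  shows "ind U \<in> Fm P ` V"
proof -
  obtain \<mu> where "\<mu> \<in> Parts" "skew_cells \<nu> \<mu> = U" using filter_mu[OF assms] by blast
  then show ?thesis using Fm_M unfolding V_Parts by (metis image_eqI image_image)
qed

lemma OP_conv: "x \<in> OP \<Longrightarrow> x \<in> conv_hull (Fm P ` V)"
proof (induction "card (x ` P - {0})" arbitrary: x rule: less_induct)
  case less
  have xO: "x \<in> RI P" "\<And>p. p \<in> P \<Longrightarrow> 0 \<le> x p \<and> x p \<le> 1"
    "\<And>p q. p \<in> P \<Longrightarrow> q \<in> P \<Longrightarrow> pos_le p q \<Longrightarrow> x p \<le> x q"
    using less.prems unfolding OP_def order_polytope_def by auto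
  define Vals where "Vals = x ` P - {0}"
  have finV: "finite Vals" unfolding Vals_def using finP by simp
  show ?case
  proof (cases "Vals = {}")
    case True
    have "x = ind {}"
    proof
      fix p show "x p = ind {} p"
        using True xO(1) unfolding Vals_def RI_def ind_def by (cases "p \<in> P"; cases p) auto
    qed
    moreover have "ind {} \<in> Fm P ` V" by (rule filter_in) auto
    ultimately show ?thesis using in_conv by metis
  next
    case False
    define a where "a = Min Vals"
    have aV: "a \<in> Vals" unfolding a_def using finV False by (rule Min_in)
    have amin: "a \<le> x p" if "p \<in> P" "x p \<noteq> 0" for p
      unfolding a_def using finV that Vals_def by (intro Min_le) auto
    obtain p0 where p0: "p0 \<in> P" "x p0 = a" "a \<noteq> 0" using aV unfolding Vals_def by auto
    have a01: "0 < a" "a \<le> 1" using xO(2)[OF p0(1)] p0 by auto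
    define U where "U = {p\<in>P. x p > 0}"
    have UP: "U \<subseteq> P" unfolding U_def by auto
    have Uup: "\<forall>p\<in>U. \<forall>q\<in>P. pos_le p q \<longrightarrow> q \<in> U"
      unfolding U_def using xO(3) by fastforce
    have indU: "ind U \<in> conv_hull (Fm P ` V)" using filter_in[OF UP Uup] by (rule in_conv)
    have xzero: "x p = 0" if "p \<notin> U" for p
    proof (cases "p \<in> P")
      case True then show ?thesis using that xO(2)[OF True] unfolding U_def by auto
    next
      case False show ?thesis by (rule RI_zero[OF xO(1) False])
    qed
    have xU: "a \<le> x p" if "p \<in> U" for p using amin that unfolding U_def by auto
    show ?thesis
    proof (cases "a = 1")
      case True
      have "x = ind U"
      proof
        fix p show "x p = ind U p"
          using xzero[of p] xU[of p] xO(2)[of p] True UP unfolding ind_def by auto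
      qed
      then show ?thesis using indU by simp
    next
      case False
      then have a1: "a < 1" using a01 by simp
      define y where "y p = (if p \<in> U then (x p - a) / (1 - a) else 0)" for p
      have yO: "y \<in> OP"
      proof -
        have "y \<in> RI P" using UP unfolding y_def RI_def by auto
        moreover have "0 \<le> y p \<and> y p \<le> 1" if "p \<in> P" for p
          using xU[of p] xO(2)[OF that] a1 unfolding y_def by (auto simp: field_simps)
        moreover have "y p \<le> y q" if "p \<in> P" "q \<in> P" "pos_le p q" for p q
        proof (cases "p \<in> U")
          case True
          then have "q \<in> U" using Uup that by auto
          then show ?thesis using True xO(3)[OF that] a1 unfolding y_def by (auto simp: divide_right_mono)
        next
          case False
          then show ?thesis using xU[of q] a1 unfolding y_def by auto
        qed
        ultimately show ?thesis unfolding OP_def order_polytope_def by auto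
      qed
      have "y ` P - {0} \<subseteq> (\<lambda>v. (v - a) / (1 - a)) ` (Vals - {a})"
      proof
        fix w assume "w \<in> y ` P - {0}"
        then obtain p where p: "p \<in> P" "w = y p" "w \<noteq> 0" by auto
        then have pU: "p \<in> U" unfolding y_def by (auto split: if_splits)
        have "x p \<noteq> a" using p pU unfolding y_def by auto
        moreover have "x p \<in> Vals" using pU p(1) unfolding U_def Vals_def by auto
        ultimately show "w \<in> (\<lambda>v. (v - a) / (1 - a)) ` (Vals - {a})" using p pU unfolding y_def by auto
      qed
      then have "card (y ` P - {0}) \<le> card ((\<lambda>v. (v - a) / (1 - a)) ` (Vals - {a}))"
        using finV by (intro card_mono) auto
      also have "\<dots> \<le> card (Vals - {a})" using finV by (intro card_image_le) auto
      also have "\<dots> < card Vals" using finV aV by (rule card_Diff1_less)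
      finally have "card (y ` P - {0}) < card (x ` P - {0})" unfolding Vals_def .
      then have yC: "y \<in> conv_hull (Fm P ` V)" using less.hyps yO by blast
      have "x = (\<lambda>p. a * ind U p + (1 - a) * y p)"
      proof
        fix p show "x p = a * ind U p + (1 - a) * y p"
          using xzero[of p] a1 unfolding ind_def y_def by (auto simp: field_simps)
      qed
      then show ?thesis using conv_convex[OF indU yC] a01 by simp
    qed
  qed
qed

lemma OP_eq: "conv_hull (Fm P ` V) = OP"
  using OP_conv conv_OP[OF FV_OP[unfolded OP_def]] unfolding OP_def by blast

end


theorem theorem3:
  fixes m n :: nat and la \<nu> :: "nat \<Rightarrow> nat"
  assumes "m \<ge> 1" and "n \<ge> 1"
    and "is_partition la" and "is_partition \<nu>"
    and "part_le la \<nu>" and "in_box \<nu> (n - 1) (m - 1)"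
  shows "integrally_equivalent ({1..m} \<times> {1..n}) (PASM \<nu> la m n)
           (skew_cells \<nu> la) (order_polytope (skew_cells \<nu> la) pos_le)"
proof -
  interpret pctx m n la \<nu> using assms by unfold_locales
  have PA: "PASM \<nu> la m n = conv_hull V" unfolding PASM_def V_def ..
  have lin: "\<And>F c. finite F \<Longrightarrow> Fm P (\<lambda>p. \<Sum>v\<in>F. c v * v p) = (\<lambda>q. \<Sum>v\<in>F. c v * Fm P v q)"
    by (rule Fm_lin)
  have aff: "affine_map B P (Fm P)"
    unfolding affine_map_def
  proof (intro conjI ballI allI)
    fix x :: "nat \<times> nat \<Rightarrow> real" show "Fm P x \<in> RI P" unfolding Fm_def RI_def by auto
  next
    fix x y :: "nat \<times> nat \<Rightarrow> real" and t :: real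
    show "Fm P (\<lambda>p. t * x p + (1 - t) * y p) = (\<lambda>q. t * Fm P x q + (1 - t) * Fm P y q)"
      unfolding Fm_def SS_two by auto
  qed
  have imgP: "Fm P ` PASM \<nu> la m n = OP" using conv_image[OF lin] OP_eq PA by simp
  have affsub: "aff_hull (PASM \<nu> la m n) \<subseteq> aff_hull V" unfolding PA using aff_conv by blast
  have injA: "inj_on (Fm P) (aff_hull (PASM \<nu> la m n))" using inj_on_subset[OF inj_affV affsub] .
  have injP: "inj_on (Fm P) (PASM \<nu> la m n)"
    using inj_on_subset[OF inj_affV conv_sub_aff[of V]] PA by simp
  have imgA: "Fm P ` aff_hull (PASM \<nu> la m n) = aff_hull OP"
    using aff_image[OF lin, of "PASM \<nu> la m n"] imgP by simp
  have imgZ: "Fm P ` (ZI B \<inter> aff_hull (PASM \<nu> la m n)) = ZI P \<inter> aff_hull OP"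
  proof
    show "Fm P ` (ZI B \<inter> aff_hull (PASM \<nu> la m n)) \<subseteq> ZI P \<inter> aff_hull OP"
    proof
      fix y assume "y \<in> Fm P ` (ZI B \<inter> aff_hull (PASM \<nu> la m n))"
      then obtain x where x: "x \<in> ZI B" "x \<in> aff_hull (PASM \<nu> la m n)" "y = Fm P x" by auto
      have "\<forall>p. x p \<in> \<int>" using x(1) unfolding ZI_def by auto
      then have "\<forall>q. Fm P x q \<in> \<int>" unfolding Fm_def using SS_int by auto
      moreover have "Fm P x \<in> RI P" unfolding Fm_def RI_def by auto
      ultimately have "y \<in> ZI P" using x(3) unfolding ZI_def by auto
      then show "y \<in> ZI P \<inter> aff_hull OP" using imgA x by auto
    qed
    show "ZI P \<inter> aff_hull OP \<subseteq> Fm P ` (ZI B \<inter> aff_hull (PASM \<nu> la m n))"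
    proof
      fix y assume y: "y \<in> ZI P \<inter> aff_hull OP"
      then obtain x where x: "x \<in> aff_hull (PASM \<nu> la m n)" "y = Fm P x" using imgA by auto
      have "\<forall>q. Fm P x q \<in> \<int>" using y x(2) unfolding ZI_def by auto
      then have "x \<in> ZI B" using int_affV affsub x(1) by blast
      then show "y \<in> Fm P ` (ZI B \<inter> aff_hull (PASM \<nu> la m n))" using x by auto
    qed
  qed
  have injZ: "inj_on (Fm P) (ZI B \<inter> aff_hull (PASM \<nu> la m n))" using inj_on_subset[OF injA] by blast
  have "integrally_equivalent B (PASM \<nu> la m n) P OP"
    unfolding integrally_equivalent_def bij_betw_def
    using aff injP imgP injZ imgZ by blast
  then show ?thesis unfolding B_def P_def OP_def .
qed


end
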